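(* Assume (AS0)–(AS3). Then: (i) for every $\epsilon>0$, $\limsup_{T\to\infty}R_\epsilon(T)/T^{1+d}<\infty$; (ii) for every $\epsilon>0$, $\limsup_{T\to\infty}R_\epsilon(T)/\big(T\,G(2\epsilon T)\big)<\infty$; (iii) if $\epsilon\in(0,\tfrac12)$, or if $\epsilon>0$ and $f$ is non-increasing, then $\limsup_{T\to\infty}R_\epsilon(T)/\big(T\,G(T)\big)<\infty$.
   Context: Let $d\ge 1$. Let $V=\{V(t,x):(t,x)\in\mathbb Z_+\times\mathbb Z^d\}$ be i.i.d. real random variables under a probability measure $Q$ (the expectation is also denoted $Q$). Assumptions: (AS0) $V(0,0)$ is non-degenerate; (AS1) $Q(V(0,0))=0$; (AS2) there is $\bar\eta>0$ with $Q(e^{\eta V(0,0)})<\infty$ for all $|\eta|<\bar\eta$; (AS3) there exist $\bar x>0$ and a continuous strictly increasing function $G:[0,\infty)\to[0,\infty)$ with $G(0)=0$, $\lim_{x\to\infty}G(x)=\infty$, and $Q(-V(0,0)>x)=e^{-xG(x)}$ for all $x\ge\bar x$. $f(x)=G(x)/x^d$ for $x>0$. $P_x$ is the law of simple symmetric nearest-neighbour random walk $\gamma$ on $\mathbb Z^d$ with $\gamma(0)=x$, independent of $V$, $E_x$ its expectation; $H_\gamma(T)=\sum_{t=0}^{T-1}V(t,\gamma(t))$ and $Z(T)=E_0 e^{H_\gamma(T)}$. There is a deterministic $\lambda\in[0,\infty)$ with $\frac1T\ln Z(T)\to\lambda$ $Q$-a.s. For $\epsilon>0$, $R_\epsilon(T)=-\ln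 Q(Z(T)\le e^{(\lambda-\epsilon)T})$. *)

theory Defs
  imports "HOL-Probability.Probability"
begin

text \<open>Nearest-neighbour unit steps in Z^d, with Z^d rendered as int ^ 'd, d = CARD('d).\<close>
definition unit_steps :: "(int ^ 'd) set" where
  "unit_steps = {axis i 1 | i. True} \<union> {axis i (-1) | i. True}"

definition walk :: "(int ^ 'd) list \<Rightarrow> nat \<Rightarrow> int ^ 'd" where
  "walk xs t = sum_list (take t xs)"

text \<open>Z(T) = E_0 exp(sum_{t<T} V(t, gamma t)): the walk positions gamma(0),...,gamma(T-1)
  are determined by T-1 i.i.d. uniform steps, each with probability 1/(2d).\<close>
definition partition_fn :: "(nat \<times> (int ^ 'd) \<Rightarrow> 'a \<Rightarrow> real) \<Rightarrow> nat \<Rightarrow> 'a \<Rightarrow> real" where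
  "partition_fn V T \<omega> =
     (\<Sum>xs\<in>{xs. set xs \<subseteq> (unit_steps :: (int ^ 'd) set) \<and> length xs = T - 1}.
        (1 / (2 * real CARD('d)) ^ (T - 1)) * exp (\<Sum>t<T. V (t, walk xs t) \<omega>))"

text \<open>R_eps(T) = - ln Q(Z(T) <= exp((lambda - eps) T)), valued in extended reals
  (= +infinity when the probability is 0).\<close>
definition rate_fn :: "'a measure \<Rightarrow> (nat \<times> (int ^ 'd) \<Rightarrow> 'a \<Rightarrow> real) \<Rightarrow> real \<Rightarrow> real \<Rightarrow> nat \<Rightarrow> ereal" where
  "rate_fn M V lam eps T =
     (let p = measure M {\<omega> \<in> space M. partition_fn V T \<omega> \<le> exp ((lam - eps) * real T)}
      in if p = 0 then \<infinity> else ereal (- ln p))"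

end

theory Submission
  imports Defs
begin


lemma unit_steps_finite: "finite (unit_steps :: (int^'d) set)"
proof -
  have "(unit_steps :: (int^'d) set) = range (\<lambda>i::'d. axis i (1::int)) \<union> range (\<lambda>i::'d. axis i (-1::int))"
    unfolding unit_steps_def by auto
  then show ?thesis by (metis finite finite_Un finite_imageI)
qed

lemma unit_steps_card: "card (unit_steps :: (int^'d) set) \<le> 2 * CARD('d)"
proof -
  have "card (unit_steps :: (int^'d) set) \<le> card (range (\<lambda>i::'d. axis i (1::int))) + card (range (\<lambda>i::'d. axis i (-1::int)))"
    unfolding unit_steps_def by (rule order.trans[OF card_Un_le]) (simp add: full_SetCompr_eq)
  also have "\<dots> \<le> CARD('d) + CARD('d)" by (intro add_mono card_image_le) auto
  finally show ?thesis by simp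
qed

lemma unit_steps_ne: "axis i 1 \<in> (unit_steps :: (int^'d) set)"
  unfolding unit_steps_def by auto

lemma unit_step_comp: "u \<in> unit_steps \<Longrightarrow> \<bar>u $ i\<bar> \<le> 1"
proof -
  assume "u \<in> unit_steps"
  then obtain j and s :: int where u: "u = axis j s" "s = 1 \<or> s = -1" unfolding unit_steps_def by blast
  have "u $ i = (if i = j then s else 0)" unfolding u(1) by (simp add: axis_def)
  then show ?thesis using u(2) by auto
qed

lemma sum_list_comp: "set ys \<subseteq> unit_steps \<Longrightarrow> \<bar>sum_list ys $ i\<bar> \<le> int (length ys)"
proof (induction ys)
  case Nil then show ?case by (simp add: zero_vec_def)
next
  case (Cons y ys)
  have "y \<in> unit_steps" using Cons.prems by simp
  then have a: "\<bar>y $ i\<bar> \<le> 1" by (rule unit_step_comp)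
  have "set ys \<subseteq> unit_steps" using Cons.prems by simp
  then have b: "\<bar>sum_list ys $ i\<bar> \<le> int (length ys)" by (rule Cons.IH)
  have c: "sum_list (y # ys) $ i = y $ i + sum_list ys $ i" by simp
  have d: "\<bar>y $ i + sum_list ys $ i\<bar> \<le> \<bar>y $ i\<bar> + \<bar>sum_list ys $ i\<bar>" by (rule abs_triangle_ineq)
  have e: "int (length (y # ys)) = 1 + int (length ys)" by simp
  show ?case unfolding c e using a b d by linarith
qed

lemma walk_comp: "set xs \<subseteq> unit_steps \<Longrightarrow> \<bar>walk xs t $ i\<bar> \<le> int t"
proof -
  assume a: "set xs \<subseteq> unit_steps"
  have "set (take t xs) \<subseteq> unit_steps" by (rule order_trans[OF set_take_subset a])
  then have 1: "\<bar>walk xs t $ i\<bar> \<le> int (length (take t xs))" unfolding walk_def by (rule sum_list_comp)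
  have "length (take t xs) \<le> t" by simp
  then have "int (length (take t xs)) \<le> int t" by (rule of_nat_mono)
  then show ?thesis using 1 by linarith
qed

definition wbox :: "nat \<Rightarrow> (int^'d) set" where
  "wbox T = {x. \<forall>i. \<bar>x $ i\<bar> \<le> int T}"

lemma box_finite_card: "finite (wbox T :: (int^'d) set) \<and> card (wbox T :: (int^'d) set) \<le> (2*T+1) ^ CARD('d)"
proof -
  let ?f = "\<lambda>x::int^'d. \<lambda>i. x $ i"
  have inj: "inj_on ?f (wbox T)" by (auto simp: inj_on_def vec_eq_iff fun_eq_iff)
  have sub: "?f ` wbox T \<subseteq> PiE UNIV (\<lambda>_. {-int T..int T})" unfolding wbox_def
  proof (intro subsetI)
    fix y assume "y \<in> (\<lambda>x::int^'d. \<lambda>i. x $ i) ` {x. \<forall>i. \<bar>x $ i\<bar> \<le> int T}"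
    then obtain x where x: "\<forall>i. \<bar>x $ i\<bar> \<le> int T" "y = (\<lambda>i. x $ i)" by blast
    have "x $ i \<in> {-int T..int T}" for i using x(1)[rule_format, of i] by (simp add: abs_le_iff)
    then show "y \<in> PiE UNIV (\<lambda>_. {-int T..int T})" using x(2) by auto
  qed
  have fin: "finite (PiE (UNIV::'d set) (\<lambda>_. {-int T..int T}))" by (simp add: finite_PiE)
  have c: "card (PiE (UNIV::'d set) (\<lambda>_. {-int T..int T})) = (2*T+1) ^ CARD('d)"
  proof -
    have "card {-int T..int T} = 2*T+1" by simp
    then show ?thesis by (simp add: card_PiE)
  qed
  have "finite (wbox T :: (int^'d) set)" using inj sub fin finite_imageD finite_subset by blast
  moreover have "card (wbox T :: (int^'d) set) \<le> (2*T+1) ^ CARD('d)"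
    using card_inj_on_le[OF inj sub fin] c by simp
  ultimately show ?thesis by simp
qed

lemma walk_in_box: "set xs \<subseteq> unit_steps \<Longrightarrow> t \<le> T \<Longrightarrow> walk xs t \<in> wbox T"
proof -
  assume a: "set xs \<subseteq> unit_steps" "t \<le> T"
  have "\<bar>walk xs t $ i\<bar> \<le> int T" for i using walk_comp[OF a(1), of t i] a(2) by linarith
  then show ?thesis unfolding wbox_def by auto
qed

definition paths :: "nat \<Rightarrow> (int^'d) list set" where
  "paths T = {xs. set xs \<subseteq> unit_steps \<and> length xs = T - 1}"

lemma paths_finite: "finite (paths T)"
  unfolding paths_def using unit_steps_finite by (rule finite_lists_length_eq)

lemma paths_ne: "replicate (T-1) (axis i 1) \<in> paths T"
  unfolding paths_def using unit_steps_ne by auto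

lemma paths_card: "card (paths T :: (int^'d) list set) \<le> (2*CARD('d)) ^ (T-1)"
proof -
  have "card (paths T :: (int^'d) list set) = card (unit_steps :: (int^'d) set) ^ (T-1)"
    unfolding paths_def by (rule card_lists_length_eq[OF unit_steps_finite])
  also have "\<dots> \<le> (2*CARD('d)) ^ (T-1)" by (rule power_mono[OF unit_steps_card]) simp
  finally show ?thesis .
qed

lemma partition_fn_paths: "partition_fn (V :: nat \<times> (int^'d) \<Rightarrow> 'a \<Rightarrow> real) T \<omega> =
   (\<Sum>xs\<in>paths T. (1 / (2 * real CARD('d)) ^ (T - 1)) * exp (\<Sum>t<T. V (t, walk xs t) \<omega>))"
  unfolding partition_fn_def paths_def by simp

lemma partition_fn_pos: "partition_fn (V :: nat \<times> (int^'d) \<Rightarrow> 'a \<Rightarrow> real) T \<omega> > 0"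
  unfolding partition_fn_paths
  by (rule sum_pos[OF paths_finite]) (use paths_ne in auto)



lemma (in prob_space) prob_Int_ge:
  assumes "A \<in> events" "B \<in> events"
  shows "prob (A \<inter> B) \<ge> prob A + prob B - 1"
proof -
  have "prob (A \<union> B) = prob A + prob B - prob (A \<inter> B)"
    using assms by (intro measure_Un3) (auto simp: fmeasurable_def less_top[symmetric])
  moreover have "prob (A \<union> B) \<le> 1" by simp
  ultimately show ?thesis by linarith
qed

lemma (in prob_space) AE_eventually_prob:
  assumes ev: "AE \<omega> in M. eventually (\<lambda>T. P T \<omega>) sequentially"
    and meas: "\<And>T. {\<omega> \<in> space M. P T \<omega>} \<in> events"
    and c: "c < 1"
  shows "eventually (\<lambda>T. prob {\<omega> \<in> space M. P T \<omega>} > c) sequentially"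
proof -
  define A where "A n = {\<omega> \<in> space M. \<forall>T. n \<le> T \<longrightarrow> P T \<omega>}" for n
  have Aev: "A n \<in> events" for n
    unfolding A_def
  proof (intro sets.sets_Collect_countable_All)
    fix T
    show "{\<omega> \<in> space M. n \<le> T \<longrightarrow> P T \<omega>} \<in> events"
    proof (cases "n \<le> T")
      case True then show ?thesis using meas[of T] by simp
    next
      case False then show ?thesis by simp
    qed
  qed
  have inc: "incseq A" unfolding A_def incseq_def by auto
  have "(\<lambda>n. prob (A n)) \<longlonglongrightarrow> prob (\<Union> (range A))"
    using Aev inc by (intro finite_Lim_measure_incseq) auto
  moreover have "prob (\<Union> (range A)) = 1"
  proof -
    have "AE \<omega> in M. \<omega> \<in> \<Union> (range A)"
      using ev AE_space
    proof eventually_elim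
      case (elim \<omega>)
      then obtain n where "\<forall>T\<ge>n. P T \<omega>" by (auto simp: eventually_sequentially)
      then show ?case using elim unfolding A_def by auto
    qed
    then show ?thesis using Aev by (subst prob_eq_1) auto
  qed
  ultimately have "eventually (\<lambda>n. prob (A n) > c) sequentially"
    using c by (auto dest: order_tendstoD)
  then show ?thesis
  proof eventually_elim
    case (elim n)
    have "prob (A n) \<le> prob {\<omega> \<in> space M. P n \<omega>}"
      using meas by (intro finite_measure_mono) (auto simp: A_def)
    then show ?case using elim by linarith
  qed
qed

locale setting = prob_space M for M :: "'a measure" +
  fixes V :: "nat \<times> (int ^ 'd) \<Rightarrow> 'a \<Rightarrow> real"
  assumes meas[measurable]: "\<And>i. V i \<in> borel_measurable M"
    and indep: "indep_vars (\<lambda>_. borel) V UNIV"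
    and ident: "\<And>i. distr M borel (V i) = distr M borel (V (0, 0))"
begin

lemma Z_meas[measurable]: "partition_fn V T \<in> borel_measurable M"
proof -
  have h: "(\<lambda>x. exp (\<Sum>t<T. V (t, walk xs t) x)) \<in> borel_measurable M" for xs
  proof -
    have "(\<lambda>x. \<Sum>t<T. V (t, walk xs t) x) \<in> borel_measurable M" by (rule borel_measurable_sum) (rule meas)
    then show ?thesis by (rule measurable_compose[OF _ borel_measurable_exp])
  qed
  show ?thesis unfolding partition_fn_paths
    apply (rule borel_measurable_sum)
    apply (rule borel_measurable_times)
     apply (rule borel_measurable_const)
    apply (rule h)
    done
qed

lemma prob_V_eq: "A \<in> sets borel \<Longrightarrow> prob (V i -` A \<inter> space M) = prob (V (0,0) -` A \<inter> space M)"
  using ident[of i] by (metis meas measure_distr sets_distr)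

lemma weight_bound: "real (card (paths T :: (int^'d) list set)) * (1 / (2 * real CARD('d)) ^ (T - 1)) \<le> 1"
proof -
  have "real (card (paths T :: (int^'d) list set)) \<le> real ((2*CARD('d)) ^ (T-1))"
    using paths_card by (rule of_nat_mono)
  also have "\<dots> = (2 * real CARD('d)) ^ (T-1)" by simp
  finally have h: "real (card (paths T :: (int^'d) list set)) \<le> (2 * real CARD('d)) ^ (T-1)" .
  have pos: "(2 * real CARD('d)) ^ (T-1) > 0" by simp
  have "real (card (paths T :: (int^'d) list set)) * (1 / (2 * real CARD('d)) ^ (T - 1))
     = real (card (paths T :: (int^'d) list set)) / (2 * real CARD('d)) ^ (T - 1)" by (simp add: power_one_over)
  also have "\<dots> \<le> 1" using h pos by simp
  finally show ?thesis .
qed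

lemma part_i:
  assumes c: "c \<ge> 0" and T: "T \<ge> 1"
  shows "prob {\<omega> \<in> space M. partition_fn V T \<omega> \<le> exp (- c * real T)}
     \<ge> prob {\<omega> \<in> space M. V (0,0) \<omega> \<le> - c} ^ (T * (2*T+1) ^ CARD('d))"
proof -
  define q where "q = prob {\<omega> \<in> space M. V (0,0) \<omega> \<le> - c}"
  define J where "J = {..<T} \<times> (wbox T :: (int^'d) set)"
  have finJ: "finite J" unfolding J_def using box_finite_card by auto
  have "(0::int^'d) \<in> wbox T" unfolding wbox_def by simp
  then have "(0, 0) \<in> J" unfolding J_def using T by simp
  then have neJ: "J \<noteq> {}" by blast
  have cardJ: "card J \<le> T * (2*T+1) ^ CARD('d)"
    unfolding J_def card_cartesian_product using box_finite_card[where 'd='d, of T] by simp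
  define F where "F = (\<Inter>s\<in>J. V s -` {..-c} \<inter> space M)"
  have "prob F = (\<Prod>s\<in>J. prob (V s -` {..-c} \<inter> space M))"
    unfolding F_def by (rule indep_varsD[OF indep neJ finJ]) auto
  also have "\<dots> = (\<Prod>s\<in>J. q)"
  proof (rule prod.cong[OF refl])
    fix s
    have "prob (V s -` {..-c} \<inter> space M) = prob (V (0,0) -` {..-c} \<inter> space M)" by (rule prob_V_eq) simp
    also have "V (0,0) -` {..-c} \<inter> space M = {\<omega> \<in> space M. V (0,0) \<omega> \<le> - c}" by auto
    finally show "prob (V s -` {..-c} \<inter> space M) = q" unfolding q_def .
  qed
  also have "\<dots> = q ^ card J" by simp
  finally have pF: "prob F = q ^ card J" .
  have q01: "0 \<le> q" "q \<le> 1" unfolding q_def by auto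
  have "q ^ (T * (2*T+1) ^ CARD('d)) \<le> q ^ card J"
    by (rule power_decreasing[OF cardJ q01])
  also have "\<dots> = prob F" using pF by simp
  also have "\<dots> \<le> prob {\<omega> \<in> space M. partition_fn V T \<omega> \<le> exp (- c * real T)}"
  proof (rule finite_measure_mono)
    show "{\<omega> \<in> space M. partition_fn V T \<omega> \<le> exp (- c * real T)} \<in> events" by measurable
    show "F \<subseteq> {\<omega> \<in> space M. partition_fn V T \<omega> \<le> exp (- c * real T)}"
    proof
      fix \<omega> assume \<omega>: "\<omega> \<in> F"
      have sp: "\<omega> \<in> space M" using \<omega> neJ unfolding F_def by blast
      have Vle: "V s \<omega> \<le> - c" if "s \<in> J" for s using \<omega> that unfolding F_def by blast
      define w where "w = (1 / (2 * real CARD('d)) ^ (T - 1))"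
      have w0: "w \<ge> 0" unfolding w_def by simp
      have "partition_fn V T \<omega> = (\<Sum>xs\<in>paths T. w * exp (\<Sum>t<T. V (t, walk xs t) \<omega>))"
        unfolding partition_fn_paths w_def ..
      also have "\<dots> \<le> (\<Sum>xs\<in>(paths T :: (int^'d) list set). w * exp (- c * real T))"
      proof (rule sum_mono)
        fix xs assume xs: "xs \<in> (paths T :: (int^'d) list set)"
        have "(\<Sum>t<T. V (t, walk xs t) \<omega>) \<le> (\<Sum>t<T. - c)"
        proof (rule sum_mono)
          fix t assume "t \<in> {..<T}"
          then have "(t, walk xs t) \<in> J" unfolding J_def using xs walk_in_box[of xs t T]
            unfolding paths_def by auto
          then show "V (t, walk xs t) \<omega> \<le> - c" by (rule Vle)
        qed
        also have "\<dots> = - c * real T" by simp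
        finally show "w * exp (\<Sum>t<T. V (t, walk xs t) \<omega>) \<le> w * exp (- c * real T)"
          using w0 by (intro mult_left_mono) auto
      qed
      also have "\<dots> = (real (card (paths T :: (int^'d) list set)) * w) * exp (- c * real T)" by simp
      also have "\<dots> \<le> 1 * exp (- c * real T)"
        using weight_bound[of T] unfolding w_def[symmetric] by (intro mult_right_mono) auto
      finally show "\<omega> \<in> {\<omega> \<in> space M. partition_fn V T \<omega> \<le> exp (- c * real T)}" using sp by simp
    qed
  qed
  finally show ?thesis unfolding q_def .
qed

definition Bset :: "(nat \<times> (int^'d)) set" where "Bset = UNIV - {(0,0)}"

definition gfun :: "nat \<Rightarrow> (nat \<times> (int^'d) \<Rightarrow> real) \<Rightarrow> real" where
  "gfun T v = (\<Sum>xs\<in>(paths T :: (int^'d) list set). (1 / (2 * real CARD('d)) ^ (T - 1)) *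
      exp (\<Sum>t<T-1. v (Suc t, walk xs (Suc t))))"

definition Yv :: "'a \<Rightarrow> (nat \<times> (int^'d) \<Rightarrow> real)" where
  "Yv \<omega> = restrict (\<lambda>i. V i \<omega>) Bset"

lemma Z_split:
  assumes T: "T \<ge> 1"
  shows "partition_fn V T \<omega> = exp (V (0,0) \<omega>) * gfun T (Yv \<omega>)"
proof -
  obtain n where n: "T = Suc n" using T by (cases T) auto
  define w where "w = (1 / (2 * real CARD('d)) ^ (T - 1))"
  have "partition_fn V T \<omega> = (\<Sum>xs\<in>(paths T :: (int^'d) list set). w * exp (\<Sum>t<T. V (t, walk xs t) \<omega>))"
    unfolding partition_fn_paths w_def ..
  also have "\<dots> = (\<Sum>xs\<in>(paths T :: (int^'d) list set). exp (V (0,0) \<omega>) * (w * exp (\<Sum>t<T-1. Yv \<omega> (Suc t, walk xs (Suc t)))))"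
  proof (rule sum.cong[OF refl])
    fix xs :: "(int^'d) list"
    have w0: "walk xs 0 = 0" unfolding walk_def by simp
    have Y: "Yv \<omega> (Suc t, x) = V (Suc t, x) \<omega>" for t x unfolding Yv_def Bset_def by simp
    have "(\<Sum>t<T. V (t, walk xs t) \<omega>) = V (0, walk xs 0) \<omega> + (\<Sum>t<n. V (Suc t, walk xs (Suc t)) \<omega>)"
      unfolding n by (rule sum.lessThan_Suc_shift)
    also have "\<dots> = V (0,0) \<omega> + (\<Sum>t<T-1. Yv \<omega> (Suc t, walk xs (Suc t)))"
      unfolding w0 Y n by simp
    finally show "w * exp (\<Sum>t<T. V (t, walk xs t) \<omega>) = exp (V (0,0) \<omega>) * (w * exp (\<Sum>t<T-1. Yv \<omega> (Suc t, walk xs (Suc t))))"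
      by (simp add: exp_add)
  qed
  also have "\<dots> = exp (V (0,0) \<omega>) * gfun T (Yv \<omega>)"
    unfolding gfun_def w_def by (simp add: sum_distrib_left)
  finally show ?thesis .
qed

lemma gfun_meas: "gfun T \<in> borel_measurable (PiM Bset (\<lambda>_. borel))"
proof -
  have h: "(\<lambda>v::nat \<times> (int^'d) \<Rightarrow> real. exp (\<Sum>t<T-1. v (Suc t, walk xs (Suc t)))) \<in> borel_measurable (PiM Bset (\<lambda>_. borel))" for xs :: "(int^'d) list"
  proof -
    have "(\<lambda>v::nat \<times> (int^'d) \<Rightarrow> real. \<Sum>t<T-1. v (Suc t, walk xs (Suc t))) \<in> borel_measurable (PiM Bset (\<lambda>_. borel))"
    proof (rule borel_measurable_sum)
      fix t
      show "(\<lambda>v::nat \<times> (int^'d) \<Rightarrow> real. v (Suc t, walk xs (Suc t))) \<in> borel_measurable (PiM Bset (\<lambda>_. borel))"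
        by (rule measurable_component_singleton) (simp add: Bset_def)
    qed
    then show ?thesis by (rule measurable_compose[OF _ borel_measurable_exp])
  qed
  show ?thesis unfolding gfun_def
    apply (rule borel_measurable_sum)
    apply (rule borel_measurable_times)
     apply (rule borel_measurable_const)
    apply (rule h)
    done
qed

lemma indep_split:
  shows "prob {\<omega> \<in> space M. V (0,0) \<omega> \<le> a \<and> gfun T (Yv \<omega>) \<le> b}
    = prob {\<omega> \<in> space M. V (0,0) \<omega> \<le> a} * prob {\<omega> \<in> space M. gfun T (Yv \<omega>) \<le> b}"
proof -
  let ?X = "\<lambda>\<omega>. restrict (\<lambda>i. V i \<omega>) {(0,0)}"
  have ind: "indep_var (PiM {(0::nat,0::int^'d)} (\<lambda>_. borel)) ?X (PiM Bset (\<lambda>_. borel)) Yv"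
    unfolding Yv_def[abs_def] by (rule indep_var_restrict[OF indep]) (auto simp: Bset_def)
  define S1 where "S1 = {v \<in> space (PiM {(0::nat,0::int^'d)} (\<lambda>_. borel)). v (0,0) \<le> a}"
  define S2 where "S2 = {v \<in> space (PiM Bset (\<lambda>_. borel)). gfun T v \<le> b}"
  have proj: "(\<lambda>v. v (0,0)) \<in> borel_measurable (PiM {(0::nat,0::int^'d)} (\<lambda>_. borel))"
    by (rule measurable_component_singleton) simp
  have S1: "S1 \<in> sets (PiM {(0::nat,0::int^'d)} (\<lambda>_. borel))"
    unfolding S1_def using proj by measurable
  have S2: "S2 \<in> sets (PiM Bset (\<lambda>_. borel))"
    unfolding S2_def using gfun_meas[of T] by measurable
  have "prob ((\<lambda>x. (?X x, Yv x)) -` (S1 \<times> S2) \<inter> space M) = prob (?X -` S1 \<inter> space M) * prob (Yv -` S2 \<inter> space M)"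
    by (rule indep_varD[OF ind S1 S2])
  moreover have "(\<lambda>x. (?X x, Yv x)) -` (S1 \<times> S2) \<inter> space M = {\<omega> \<in> space M. V (0,0) \<omega> \<le> a \<and> gfun T (Yv \<omega>) \<le> b}"
    unfolding S1_def S2_def Yv_def by (auto simp: space_PiM)
  moreover have "?X -` S1 \<inter> space M = {\<omega> \<in> space M. V (0,0) \<omega> \<le> a}"
    unfolding S1_def by (auto simp: space_PiM)
  moreover have "Yv -` S2 \<inter> space M = {\<omega> \<in> space M. gfun T (Yv \<omega>) \<le> b}"
    unfolding S2_def Yv_def by (auto simp: space_PiM)
  ultimately show ?thesis by simp
qed

lemma part_ii:
  assumes eps: "eps > 0"
    and lam_lim: "AE \<omega> in M. (\<lambda>T. ln (partition_fn V T \<omega>) / real T) \<longlonglongrightarrow> lam"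
    and a0: "prob {\<omega> \<in> space M. V (0,0) \<omega> \<ge> - a0} \<ge> 1/2"
  shows "eventually (\<lambda>T. prob {\<omega> \<in> space M. partition_fn V T \<omega> \<le> exp ((lam - eps) * real T)}
            \<ge> prob {\<omega> \<in> space M. V (0,0) \<omega> \<le> - (2 * eps * real T)} / 4) sequentially"
proof -
  have ev1: "AE \<omega> in M. eventually (\<lambda>T. partition_fn V T \<omega> \<le> exp ((lam + eps/2) * real T)) sequentially"
    using lam_lim
  proof eventually_elim
    case (elim \<omega>)
    have "eventually (\<lambda>T. ln (partition_fn V T \<omega>) / real T < lam + eps/2) sequentially"
      using elim eps by (intro order_tendstoD(2)) auto
    moreover have "eventually (\<lambda>T. T \<ge> (1::nat)) sequentially" by (rule eventually_ge_at_top)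
    ultimately show ?case
    proof eventually_elim
      case (elim T)
      then have Tpos: "real T > 0" by simp
      from elim have "ln (partition_fn V T \<omega>) < (lam + eps/2) * real T"
        using Tpos by (simp add: divide_less_eq)
      then have "exp (ln (partition_fn V T \<omega>)) \<le> exp ((lam + eps/2) * real T)" by simp
      then show ?case using partition_fn_pos[of V T \<omega>] by simp
    qed
  qed
  have ev2: "eventually (\<lambda>T. prob {\<omega> \<in> space M. partition_fn V T \<omega> \<le> exp ((lam + eps/2) * real T)} > 3/4) sequentially"
  proof (rule AE_eventually_prob[OF ev1])
    fix T show "{\<omega> \<in> space M. partition_fn V T \<omega> \<le> exp ((lam + eps/2) * real T)} \<in> events" by measurable
  qed simp
  have ev3: "eventually (\<lambda>T. a0 \<le> eps * real T / 2) sequentially"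
  proof -
    obtain N :: nat where N: "real N \<ge> 2 * a0 / eps" using real_arch_simple by blast
    show ?thesis unfolding eventually_sequentially
    proof (intro exI allI impI)
      fix T assume "N \<le> T"
      then have "2 * a0 / eps \<le> real T" using N by linarith
      then show "a0 \<le> eps * real T / 2" using eps by (simp add: divide_le_eq mult.commute)
    qed
  qed
  show ?thesis using ev2 ev3 eventually_ge_at_top[of 1]
  proof eventually_elim
    case (elim T)
    define A where "A = {\<omega> \<in> space M. partition_fn V T \<omega> \<le> exp ((lam + eps/2) * real T)}"
    define B where "B = {\<omega> \<in> space M. V (0,0) \<omega> \<ge> - a0}"
    define W where "W = {\<omega> \<in> space M. gfun T (Yv \<omega>) \<le> exp ((lam + eps) * real T)}"
    have Aev: "A \<in> events" unfolding A_def by measurable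
    have Bev: "B \<in> events" unfolding B_def by measurable
    have Wev: "W \<in> events"
    proof -
      have "Yv \<in> measurable M (PiM Bset (\<lambda>_. borel))"
        unfolding Yv_def[abs_def] by (rule measurable_restrict) simp
      then have "(\<lambda>\<omega>. gfun T (Yv \<omega>)) \<in> borel_measurable M"
        by (rule measurable_compose[OF _ gfun_meas])
      then show ?thesis unfolding W_def by measurable
    qed
    have AB: "A \<inter> B \<subseteq> W"
    proof
      fix \<omega> assume "\<omega> \<in> A \<inter> B"
      then have sp: "\<omega> \<in> space M" and z: "partition_fn V T \<omega> \<le> exp ((lam + eps/2) * real T)"
        and v: "V (0,0) \<omega> \<ge> - a0" unfolding A_def B_def by auto
      have "gfun T (Yv \<omega>) = partition_fn V T \<omega> * exp (- V (0,0) \<omega>)"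
        using Z_split[of T \<omega>] elim by (simp add: exp_minus field_simps)
      also have "\<dots> \<le> exp ((lam + eps/2) * real T) * exp a0"
        using z v by (intro mult_mono) auto
      also have "\<dots> = exp ((lam + eps/2) * real T + a0)" by (simp add: exp_add)
      also have "\<dots> \<le> exp ((lam + eps) * real T)" using elim by (simp add: algebra_simps)
      finally show "\<omega> \<in> W" unfolding W_def using sp by simp
    qed
    have "prob (A \<inter> B) \<ge> prob A + prob B - 1" by (rule prob_Int_ge[OF Aev Bev])
    moreover have "prob B \<ge> 1/2" using a0 unfolding B_def .
    moreover have "prob A > 3/4" using elim unfolding A_def by simp
    moreover have "prob (A \<inter> B) \<le> prob W" using AB Wev by (intro finite_measure_mono)
    ultimately have pW: "prob W \<ge> 1/4" by linarith
    define C where "C = {\<omega> \<in> space M. V (0,0) \<omega> \<le> - (2 * eps * real T) \<and> gfun T (Yv \<omega>) \<le> exp ((lam + eps) * real T)}"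
    have "prob {\<omega> \<in> space M. V (0,0) \<omega> \<le> - (2 * eps * real T)} / 4
        \<le> prob {\<omega> \<in> space M. V (0,0) \<omega> \<le> - (2 * eps * real T)} * prob W"
    proof -
      have "0 \<le> prob {\<omega> \<in> space M. V (0,0) \<omega> \<le> - (2 * eps * real T)}" by simp
      then have "prob {\<omega> \<in> space M. V (0,0) \<omega> \<le> - (2 * eps * real T)} * (1/4)
        \<le> prob {\<omega> \<in> space M. V (0,0) \<omega> \<le> - (2 * eps * real T)} * prob W"
        using pW by (intro mult_left_mono) auto
      then show ?thesis by simp
    qed
    also have "\<dots> = prob C" unfolding C_def W_def by (rule indep_split[symmetric])
    also have "\<dots> \<le> prob {\<omega> \<in> space M. partition_fn V T \<omega> \<le> exp ((lam - eps) * real T)}"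
    proof (rule finite_measure_mono)
      show "{\<omega> \<in> space M. partition_fn V T \<omega> \<le> exp ((lam - eps) * real T)} \<in> events" by measurable
      show "C \<subseteq> {\<omega> \<in> space M. partition_fn V T \<omega> \<le> exp ((lam - eps) * real T)}"
      proof
        fix \<omega> assume "\<omega> \<in> C"
        then have sp: "\<omega> \<in> space M" and v: "V (0,0) \<omega> \<le> - (2 * eps * real T)"
          and g: "gfun T (Yv \<omega>) \<le> exp ((lam + eps) * real T)" unfolding C_def by auto
        have g0: "gfun T (Yv \<omega>) \<ge> 0"
          using Z_split[of T \<omega>] elim partition_fn_pos[of V T \<omega>]
          by (metis exp_gt_zero less_le zero_less_mult_pos)
        have "partition_fn V T \<omega> = exp (V (0,0) \<omega>) * gfun T (Yv \<omega>)" using Z_split elim by simp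
        also have "\<dots> \<le> exp (- (2 * eps * real T)) * exp ((lam + eps) * real T)"
          using v g g0 by (intro mult_mono) auto
        also have "\<dots> = exp ((lam - eps) * real T)" by (simp add: exp_add[symmetric] algebra_simps)
        finally show "\<omega> \<in> {\<omega> \<in> space M. partition_fn V T \<omega> \<le> exp ((lam - eps) * real T)}" using sp by simp
      qed
    qed
    finally show ?case .
  qed
qed

end



lemma limsup_fin:
  fixes r :: "nat \<Rightarrow> ereal" and D :: "nat \<Rightarrow> real"
  assumes "eventually (\<lambda>T. 0 < D T \<and> r T \<le> ereal (K * D T)) sequentially"
  shows "limsup (\<lambda>T. r T / ereal (D T)) < \<infinity>"
proof -
  have "eventually (\<lambda>T. r T / ereal (D T) \<le> ereal K) sequentially"
    using assms
  proof eventually_elim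
    case (elim T)
    then have D: "D T > 0" and r: "r T \<le> ereal (K * D T)" by auto
    show ?case
    proof (cases "r T")
      case (real x)
      then have "x \<le> K * D T" using r by simp
      then have "x / D T \<le> K" using D by (simp add: divide_le_eq)
      then show ?thesis using real D by (simp add: ereal_divide)
    next
      case PInf then show ?thesis using r by simp
    next
      case MInf then show ?thesis using D by (simp add: divide_ereal_def)
    qed
  qed
  then have "limsup (\<lambda>T. r T / ereal (D T)) \<le> ereal K" by (rule Limsup_bounded)
  then show ?thesis using order.strict_trans1[of _ "ereal K" \<infinity>] by simp
qed

lemma rate_le:
  assumes "measure M {\<omega> \<in> space M. partition_fn V T \<omega> \<le> exp ((lam - eps) * real T)} \<ge> exp (- R)"
  shows "rate_fn M V lam eps T \<le> ereal R"
proof -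
  define p where "p = measure M {\<omega> \<in> space M. partition_fn V T \<omega> \<le> exp ((lam - eps) * real T)}"
  have p: "p \<ge> exp (- R)" using assms unfolding p_def .
  then have p0: "p > 0" using exp_gt_zero[of "-R"] by linarith
  have "ln (exp (- R)) \<le> ln p" using p p0 by (subst ln_le_cancel_iff) auto
  then have "- ln p \<le> R" by simp
  then show ?thesis using p0 unfolding rate_fn_def Let_def p_def[symmetric] by simp
qed

lemma ev_lin:
  assumes c: "c > 0"
  shows "eventually (\<lambda>T::nat. B \<le> c * real T) sequentially"
proof -
  obtain N :: nat where N: "real N \<ge> B / c" using real_arch_simple by blast
  show ?thesis unfolding eventually_sequentially
  proof (intro exI allI impI)
    fix T assume "N \<le> T"
    then have "B / c \<le> real T" using N by linarith
    then show "B \<le> c * real T" using c by (simp add: divide_le_eq mult.commute)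
  qed
qed

theorem mainTheorem13:
  fixes M :: "'a measure" and V :: "nat \<times> (int ^ 'd) \<Rightarrow> 'a \<Rightarrow> real"
    and G :: "real \<Rightarrow> real" and lam :: real
  assumes prob: "prob_space M"
    and meas: "\<And>i. V i \<in> borel_measurable M"
    and indep: "prob_space.indep_vars M (\<lambda>_. borel) V UNIV"
    and ident: "\<And>i. distr M borel (V i) = distr M borel (V (0, 0))"
    and AS0: "\<not> (\<exists>c. AE \<omega> in M. V (0, 0) \<omega> = c)"
    and AS1: "integral\<^sup>L M (V (0, 0)) = 0"
    and AS2: "\<exists>\<eta>0>0. \<forall>\<eta>. \<bar>\<eta>\<bar> < \<eta>0 \<longrightarrow> integrable M (\<lambda>\<omega>. exp (\<eta> * V (0, 0) \<omega>))"
    and G_cont: "continuous_on {0..} G"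
    and G_mono: "strict_mono_on {0..} G"
    and G0: "G 0 = 0"
    and G_lim: "filterlim G at_top at_top"
    and AS3: "\<exists>x0>0. \<forall>x\<ge>x0. measure M {\<omega> \<in> space M. - V (0, 0) \<omega> > x} = exp (- x * G x)"
    and lam_nonneg: "lam \<ge> 0"
    and lam_lim: "AE \<omega> in M. (\<lambda>T. ln (partition_fn V T \<omega>) / real T) \<longlonglongrightarrow> lam"
  shows
    "(\<forall>\<epsilon>>0. limsup (\<lambda>T. rate_fn M V lam \<epsilon> T / ereal (real T ^ (1 + CARD('d)))) < \<infinity>)
     \<and> (\<forall>\<epsilon>>0. limsup (\<lambda>T. rate_fn M V lam \<epsilon> T / ereal (real T * G (2 * \<epsilon> * real T))) < \<infinity>)
     \<and> (\<forall>\<epsilon>. ((0 < \<epsilon> \<and> \<epsilon> < 1/2) \<or>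
              (0 < \<epsilon> \<and> (\<forall>x y. 0 < x \<longrightarrow> x \<le> y \<longrightarrow> G y / y ^ CARD('d) \<le> G x / x ^ CARD('d))))
           \<longrightarrow> limsup (\<lambda>T. rate_fn M V lam \<epsilon> T / ereal (real T * G (real T))) < \<infinity>)"
proof -
  interpret setting M V
    by (rule setting.intro[OF prob], rule setting_axioms.intro[OF meas indep ident])
  obtain x0 where x0: "x0 > 0" "\<And>x. x \<ge> x0 \<Longrightarrow> prob {\<omega> \<in> space M. - V (0, 0) \<omega> > x} = exp (- x * G x)"
    using AS3 by blast
  have Gmono: "G x \<le> G y" if "0 \<le> x" "x \<le> y" for x y
    using strict_mono_on_leD[OF G_mono] that by auto
  have Gnn: "0 \<le> G x" if "0 \<le> x" for x using Gmono[of 0 x] that G0 by simp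
  obtain N0 where N0: "\<And>x. x \<ge> N0 \<Longrightarrow> G x \<ge> 1"
    using G_lim unfolding filterlim_at_top eventually_at_top_linorder by blast
  have tail: "prob {\<omega> \<in> space M. V (0,0) \<omega> \<le> - y} \<ge> exp (- y * G y)" if y: "y \<ge> x0" for y
  proof -
    have "exp (- y * G y) = prob {\<omega> \<in> space M. - V (0, 0) \<omega> > y}" using x0(2)[OF y] by simp
    also have "\<dots> \<le> prob {\<omega> \<in> space M. V (0,0) \<omega> \<le> - y}"
      by (rule finite_measure_mono) (auto, measurable)
    finally show ?thesis .
  qed
  define a0 where "a0 = max x0 (max N0 1)"
  have a0prob: "prob {\<omega> \<in> space M. V (0,0) \<omega> \<ge> - a0} \<ge> 1/2"
  proof -
    have a0: "a0 \<ge> x0" "a0 \<ge> 1" "G a0 \<ge> 1" unfolding a0_def using N0 by auto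
    have "1 \<le> a0 * G a0" using a0 mult_mono[of 1 a0 1 "G a0"] by simp
    then have "exp (- a0 * G a0) \<le> exp (-1)" by simp
    also have "exp (-1::real) \<le> 1/2"
    proof -
      have "2 \<le> exp (1::real)" using exp_ge_add_one_self[of "1::real"] by simp
      then show ?thesis by (simp add: exp_minus field_simps)
    qed
    finally have e: "exp (- a0 * G a0) \<le> 1/2" .
    have ev: "{\<omega> \<in> space M. - V (0, 0) \<omega> > a0} \<in> events" by measurable
    have "{\<omega> \<in> space M. V (0,0) \<omega> \<ge> - a0} = space M - {\<omega> \<in> space M. - V (0, 0) \<omega> > a0}" by auto
    then have "prob {\<omega> \<in> space M. V (0,0) \<omega> \<ge> - a0} = 1 - prob {\<omega> \<in> space M. - V (0, 0) \<omega> > a0}"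
      using prob_compl[OF ev] by simp
    also have "\<dots> = 1 - exp (- a0 * G a0)" using x0(2)[OF a0(1)] by simp
    finally show ?thesis using e by linarith
  qed
  have key: "eventually (\<lambda>T. real T \<ge> 1 \<and> G (2 * \<epsilon> * real T) \<ge> 1 \<and>
      rate_fn M V lam \<epsilon> T \<le> ereal (2 * \<epsilon> * real T * G (2 * \<epsilon> * real T) + ln 4)) sequentially"
    if eps: "\<epsilon> > 0" for \<epsilon>
  proof -
    have e1: "eventually (\<lambda>T. max x0 N0 \<le> (2 * \<epsilon>) * real T) sequentially"
      by (rule ev_lin) (use eps in simp)
    show ?thesis using part_ii[OF eps lam_lim a0prob] e1 eventually_ge_at_top[of 1]
    proof eventually_elim
      case (elim T)
      let ?y = "2 * \<epsilon> * real T"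
      have y: "?y \<ge> x0" "?y \<ge> N0" using elim by auto
      have "exp (- (?y * G ?y + ln 4)) = exp (- ?y * G ?y) / 4"
        by (simp add: exp_diff exp_minus)
      also have "\<dots> \<le> prob {\<omega> \<in> space M. V (0,0) \<omega> \<le> - ?y} / 4"
        using tail[OF y(1)] by simp
      also have "\<dots> \<le> prob {\<omega> \<in> space M. partition_fn V T \<omega> \<le> exp ((lam - \<epsilon>) * real T)}"
        using elim by simp
      finally have "rate_fn M V lam \<epsilon> T \<le> ereal (?y * G ?y + ln 4)" by (intro rate_le)
      then show ?case using elim N0[OF y(2)] by simp
    qed
  qed
  show ?thesis
  proof (intro conjI allI impI)
    fix \<epsilon> :: real assume eps: "\<epsilon> > 0"
    define c where "c = \<bar>\<epsilon> - lam\<bar>"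
    define q where "q = prob {\<omega> \<in> space M. V (0,0) \<omega> \<le> - c}"
    have q0: "q > 0"
    proof -
      define y where "y = max c x0"
      have "0 < exp (- y * G y)" by simp
      also have "\<dots> \<le> prob {\<omega> \<in> space M. V (0,0) \<omega> \<le> - y}" by (rule tail) (simp add: y_def)
      also have "\<dots> \<le> q" unfolding q_def
        by (rule finite_measure_mono) (auto simp: y_def, measurable)
      finally show ?thesis .
    qed
    have q1: "q \<le> 1" unfolding q_def by simp
    define L where "L = - ln q"
    have L0: "L \<ge> 0" unfolding L_def using q0 q1 by simp
    define K where "K = L * 3 ^ CARD('d)"
    show "limsup (\<lambda>T. rate_fn M V lam \<epsilon> T / ereal (real T ^ (1 + CARD('d)))) < \<infinity>"
    proof (rule limsup_fin[where K = K])
      show "eventually (\<lambda>T. 0 < real T ^ (1 + CARD('d)) \<and>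
          rate_fn M V lam \<epsilon> T \<le> ereal (K * real T ^ (1 + CARD('d)))) sequentially"
        using eventually_ge_at_top[of 1]
      proof eventually_elim
        case (elim T)
        define N where "N = T * (2*T+1) ^ CARD('d)"
        have "real N = real T * (2 * real T + 1) ^ CARD('d)" unfolding N_def by (simp add: add.commute)
        also have "\<dots> \<le> real T * (3 * real T) ^ CARD('d)"
          using elim by (intro mult_left_mono power_mono) auto
        also have "\<dots> = 3 ^ CARD('d) * real T ^ (1 + CARD('d))" by (simp add: power_mult_distrib)
        finally have Nle: "real N \<le> 3 ^ CARD('d) * real T ^ (1 + CARD('d))" .
        have "exp (- (K * real T ^ (1 + CARD('d)))) \<le> exp (- (L * real N))"
        proof -
          have "L * real N \<le> L * (3 ^ CARD('d) * real T ^ (1 + CARD('d)))"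
            using Nle L0 by (rule mult_left_mono)
          then show ?thesis unfolding K_def by (simp add: mult.assoc)
        qed
        also have "\<dots> = q ^ N"
        proof -
          have "exp (- (L * real N)) = exp (real N * ln q)" unfolding L_def by (simp add: mult.commute)
          also have "\<dots> = exp (ln q) ^ N" by (rule exp_of_nat_mult)
          also have "\<dots> = q ^ N" using q0 by simp
          finally show ?thesis .
        qed
        also have "\<dots> \<le> prob {\<omega> \<in> space M. partition_fn V T \<omega> \<le> exp (- c * real T)}"
          unfolding q_def N_def by (rule part_i) (use elim in \<open>auto simp: c_def\<close>)
        also have "\<dots> \<le> prob {\<omega> \<in> space M. partition_fn V T \<omega> \<le> exp ((lam - \<epsilon>) * real T)}"
        proof (rule finite_measure_mono)
          have "- c * real T \<le> (lam - \<epsilon>) * real T" unfolding c_def by (intro mult_right_mono) auto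
          then show "{\<omega> \<in> space M. partition_fn V T \<omega> \<le> exp (- c * real T)}
              \<subseteq> {\<omega> \<in> space M. partition_fn V T \<omega> \<le> exp ((lam - \<epsilon>) * real T)}"
            by (auto intro: order_trans)
        qed measurable
        finally have "rate_fn M V lam \<epsilon> T \<le> ereal (K * real T ^ (1 + CARD('d)))" by (intro rate_le)
        then show ?case using elim by simp
      qed
    qed
  next
    fix \<epsilon> :: real assume eps: "\<epsilon> > 0"
    show "limsup (\<lambda>T. rate_fn M V lam \<epsilon> T / ereal (real T * G (2 * \<epsilon> * real T))) < \<infinity>"
    proof (rule limsup_fin[where K = "2 * \<epsilon> + ln 4"])
      show "eventually (\<lambda>T. 0 < real T * G (2 * \<epsilon> * real T) \<and>
          rate_fn M V lam \<epsilon> T \<le> ereal ((2 * \<epsilon> + ln 4) * (real T * G (2 * \<epsilon> * real T)))) sequentially"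
        using key[OF eps]
      proof eventually_elim
        case (elim T)
        let ?D = "real T * G (2 * \<epsilon> * real T)"
        have D1: "?D \<ge> 1" using elim mult_mono[of 1 "real T" 1 "G (2 * \<epsilon> * real T)"] by simp
        have l4: "ln (4::real) \<ge> 0" by simp
        have "2 * \<epsilon> * real T * G (2 * \<epsilon> * real T) + ln 4 \<le> (2 * \<epsilon> + ln 4) * ?D"
          using mult_left_mono[OF D1 l4] by (simp add: algebra_simps)
        then show ?case using elim D1 by (auto intro: order_trans)
      qed
    qed
  next
    fix \<epsilon> :: real
    assume cond: "(0 < \<epsilon> \<and> \<epsilon> < 1/2) \<or>
              (0 < \<epsilon> \<and> (\<forall>x y. 0 < x \<longrightarrow> x \<le> y \<longrightarrow> G y / y ^ CARD('d) \<le> G x / x ^ CARD('d)))"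
    then have eps: "\<epsilon> > 0" by auto
    define K0 where "K0 = max 1 ((2 * \<epsilon>) ^ CARD('d))"
    have GK: "G (2 * \<epsilon> * real T) \<le> K0 * G (real T)" if T: "real T \<ge> 1" for T
    proof (cases "2 * \<epsilon> \<le> 1")
      case True
      have "G (2 * \<epsilon> * real T) \<le> G (real T)"
        using True T eps by (intro Gmono) (auto simp: mult_left_le_one_le)
      also have "\<dots> \<le> K0 * G (real T)"
      proof -
        have "1 * G (real T) \<le> K0 * G (real T)" unfolding K0_def
          using Gnn[of "real T"] by (intro mult_right_mono) auto
        then show ?thesis by simp
      qed
      finally show ?thesis .
    next
      case False
      then have fdec: "\<forall>x y. 0 < x \<longrightarrow> x \<le> y \<longrightarrow> G y / y ^ CARD('d) \<le> G x / x ^ CARD('d)"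
        using cond by auto
      have le: "real T \<le> 2 * \<epsilon> * real T" using False T by simp
      have Tp: "real T > 0" using T by simp
      have "G (2 * \<epsilon> * real T) / (2 * \<epsilon> * real T) ^ CARD('d) \<le> G (real T) / real T ^ CARD('d)"
        using fdec Tp le by blast
      then have "G (2 * \<epsilon> * real T) \<le> G (real T) / real T ^ CARD('d) * (2 * \<epsilon> * real T) ^ CARD('d)"
        using Tp eps by (simp add: divide_le_eq)
      also have "\<dots> = (2 * \<epsilon>) ^ CARD('d) * G (real T)"
        using Tp by (simp add: power_mult_distrib)
      also have "\<dots> \<le> K0 * G (real T)" unfolding K0_def
        using Gnn[of "real T"] by (intro mult_right_mono) auto
      finally show ?thesis .
    qed
    have K01: "K0 \<ge> 1" unfolding K0_def by simp
    show "limsup (\<lambda>T. rate_fn M V lam \<epsilon> T / ereal (real T * G (real T))) < \<infinity>"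
    proof (rule limsup_fin[where K = "2 * \<epsilon> * K0 + ln 4"])
      have e2: "eventually (\<lambda>T. N0 \<le> 1 * real T) sequentially" by (rule ev_lin) simp
      show "eventually (\<lambda>T. 0 < real T * G (real T) \<and>
          rate_fn M V lam \<epsilon> T \<le> ereal ((2 * \<epsilon> * K0 + ln 4) * (real T * G (real T)))) sequentially"
        using key[OF eps] e2
      proof eventually_elim
        case (elim T)
        let ?D = "real T * G (real T)"
        have GT: "G (real T) \<ge> 1" using N0 elim by simp
        have D1: "?D \<ge> 1" using elim GT mult_mono[of 1 "real T" 1 "G (real T)"] by simp
        have l4: "ln (4::real) \<ge> 0" by simp
        have A: "2 * \<epsilon> * real T * G (2 * \<epsilon> * real T) \<le> 2 * \<epsilon> * real T * (K0 * G (real T))"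
          using GK[of T] elim eps by (intro mult_left_mono) auto
        have B: "ln 4 \<le> ln 4 * ?D" using mult_left_mono[OF D1 l4] by simp
        have C: "(2 * \<epsilon> * K0 + ln 4) * ?D = 2 * \<epsilon> * real T * (K0 * G (real T)) + ln 4 * ?D"
          by (simp add: algebra_simps)
        have "2 * \<epsilon> * real T * G (2 * \<epsilon> * real T) + ln 4 \<le> (2 * \<epsilon> * K0 + ln 4) * ?D"
          using A B C by linarith
        then show ?case using elim D1 by (auto intro: order_trans)
      qed
    qed
  qed
qed

end
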